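(* Let $n\ge2$ and $f\in\mathbf{SB}_n$ with $\mathcal{AI}(f)=\lceil n/2\rceil$. Then $\deg(f)\ge 2^{\lfloor\log_2(n-1)\rfloor}$.
   Context: $\mathbf{SB}_n$ is the set of symmetric Boolean functions on $n$ variables; $\deg$ is the algebraic degree. The algebraic immunity is $\mathcal{AI}(f)=\min\{\deg(g): g\neq0,\ gf=0 \text{ or } g(f+1)=0\}$. *)

theory Defs
  imports Complex_Main
begin

text \<open>A Boolean function on n variables is modelled as a predicate on subsets of
  {..<n}: the input vector x in F_2^n is identified with its support
  {i. x_i = 1}. Only the values on subsets of {..<n} are relevant.\<close>

type_synonym boolfun = "nat set \<Rightarrow> bool"

text \<open>ANF coefficient (Moebius transform) over F_2:
  a_S = XOR over T subseteq S of f(T).\<close>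
definition anf_coeff :: "boolfun \<Rightarrow> nat set \<Rightarrow> bool" where
  "anf_coeff f S = odd (card {T. T \<subseteq> S \<and> f T})"

definition alg_deg :: "nat \<Rightarrow> boolfun \<Rightarrow> nat" where
  "alg_deg n f = Max ({card S | S. S \<subseteq> {..<n} \<and> anf_coeff f S} \<union> {0})"

definition symmetric_bf :: "nat \<Rightarrow> boolfun \<Rightarrow> bool" where
  "symmetric_bf n f \<longleftrightarrow>
     (\<forall>x y. x \<subseteq> {..<n} \<longrightarrow> y \<subseteq> {..<n} \<longrightarrow> card x = card y \<longrightarrow> f x = f y)"

definition nonzero_bf :: "nat \<Rightarrow> boolfun \<Rightarrow> bool" where
  "nonzero_bf n g \<longleftrightarrow> (\<exists>x. x \<subseteq> {..<n} \<and> g x)"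

definition annihilates :: "nat \<Rightarrow> boolfun \<Rightarrow> boolfun \<Rightarrow> bool" where
  "annihilates n g h \<longleftrightarrow> (\<forall>x. x \<subseteq> {..<n} \<longrightarrow> \<not> (g x \<and> h x))"

definition alg_immunity :: "nat \<Rightarrow> boolfun \<Rightarrow> nat" where
  "alg_immunity n f = (LEAST d. \<exists>g. nonzero_bf n g \<and>
      (annihilates n g f \<or> annihilates n g (\<lambda>x. \<not> f x)) \<and> alg_deg n g = d)"

end

theory Submission imports Defs "HOL-Library.Discrete_Functions" begin

definition E :: "(nat \<Rightarrow> bool) \<Rightarrow> nat \<Rightarrow> bool" where
  "E u j = (u j \<noteq> u (Suc j))"

lemma step_sets:
  assumes "a \<notin> S" "finite S"
  shows "card {T. T \<subseteq> insert a S \<and> u (card T)} =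
         card {T. T \<subseteq> S \<and> u (card T)} + card {T. T \<subseteq> S \<and> u (Suc (card T))}"
proof -
  let ?A = "{T. T \<subseteq> S \<and> u (card T)}"
  let ?B = "{T. T \<subseteq> S \<and> u (Suc (card T))}"
  have eq: "{T. T \<subseteq> insert a S \<and> u (card T)} = ?A \<union> insert a ` ?B"
  proof (rule set_eqI, rule iffI)
    fix T assume "T \<in> {T. T \<subseteq> insert a S \<and> u (card T)}"
    then have T: "T \<subseteq> insert a S" "u (card T)" by auto
    have fT: "finite T" using T(1) assms(2) finite_subset by blast
    show "T \<in> ?A \<union> insert a ` ?B"
    proof (cases "a \<in> T")
      case True
      have "T = insert a (T - {a})" using True by blast
      moreover have "T - {a} \<subseteq> S" using T(1) by blast
      moreover have "card T = Suc (card (T - {a}))" by (rule card_Suc_Diff1[OF fT True, symmetric])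
      ultimately have "T - {a} \<in> ?B" using T(2) by simp
      then have "T \<in> insert a ` ?B" using \<open>T = insert a (T - {a})\<close> by (rule rev_image_eqI)
      then show ?thesis by (rule UnI2)
    next
      case False
      then have "T \<subseteq> S" using T(1) by blast
      then have "T \<in> ?A" using T(2) by simp
      then show ?thesis by (rule UnI1)
    qed
  next
    fix T assume T: "T \<in> ?A \<union> insert a ` ?B"
    show "T \<in> {T. T \<subseteq> insert a S \<and> u (card T)}"
    proof (cases "T \<in> ?A")
      case True then show ?thesis by blast
    next
      case False
      then have "T \<in> insert a ` ?B" using T by blast
      then obtain U where U: "U \<in> ?B" "T = insert a U" by (rule imageE)
      have U1: "U \<subseteq> S" "u (Suc (card U))" using U(1) by simp_all
      have "finite U" using U1(1) assms(2) finite_subset by blast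
      moreover have "a \<notin> U" using U1(1) assms(1) by blast
      ultimately have c: "card T = Suc (card U)" unfolding U(2) by simp
      have "T \<subseteq> insert a S" unfolding U(2) using U1(1) by blast
      then show ?thesis using c U1(2) by simp
    qed
  qed
  have fin: "finite ?A" "finite ?B" using assms(2) by auto
  have disj: "?A \<inter> insert a ` ?B = {}"
  proof (rule ccontr)
    assume "?A \<inter> insert a ` ?B \<noteq> {}"
    then obtain T where "T \<in> ?A" "T \<in> insert a ` ?B" by blast
    then have "T \<subseteq> S" "a \<in> T" by auto
    then show False using assms(1) by blast
  qed
  have inj: "inj_on (insert a) ?B"
  proof (rule inj_onI)
    fix X Y assume X: "X \<in> ?B" and Y: "Y \<in> ?B" and e: "insert a X = insert a Y"
    have "a \<notin> X" "a \<notin> Y" using X Y assms(1) by auto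
    then have "X = insert a X - {a}" "Y = insert a Y - {a}" by auto
    then show "X = Y" using e by metis
  qed
  show ?thesis unfolding eq
    using card_Un_disjoint[OF fin(1) finite_imageI[OF fin(2)] disj] card_image[OF inj] by simp
qed

lemma parity_xor:
  assumes "finite S"
  shows "odd (card {T. T \<subseteq> S \<and> u (card T)} + card {T. T \<subseteq> S \<and> u (Suc (card T))})
     = odd (card {T. T \<subseteq> S \<and> E u (card T)})"
proof -
  let ?A = "{T. T \<subseteq> S \<and> u (card T)}"
  let ?B = "{T. T \<subseteq> S \<and> u (Suc (card T))}"
  let ?C = "{T. T \<subseteq> S \<and> E u (card T)}"
  have fin: "finite ?A" "finite ?B" "finite ?C" using assms by auto
  have "card ?A + card ?B = card (?A \<union> ?B) + card (?A \<inter> ?B)"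
    using card_Un_Int[OF fin(1,2)] .
  moreover have "?A \<union> ?B = ?C \<union> (?A \<inter> ?B)" by (auto simp: E_def)
  moreover have "?C \<inter> (?A \<inter> ?B) = {}" by (auto simp: E_def)
  moreover have "finite (?A \<inter> ?B)" using fin by blast
  ultimately have "card ?A + card ?B = card ?C + 2 * card (?A \<inter> ?B)"
    using card_Un_disjoint[OF fin(3)] by simp
  then show ?thesis by simp
qed

lemma odd_card_E:
  assumes "finite S"
  shows "odd (card {T. T \<subseteq> S \<and> u (card T)}) = (E ^^ card S) u 0"
  using assms
proof (induction S arbitrary: u rule: finite_induct)
  case empty
  show ?case
  proof (cases "u 0")
    case True
    have h: "{T. T \<subseteq> {} \<and> u (card T)} = {{}}" using True by auto
    show ?thesis by (simp only: h) (simp add: True)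
  next
    case False
    have h: "{T. T \<subseteq> {} \<and> u (card T)} = {}" using False by auto
    show ?thesis by (simp only: h) (simp add: False)
  qed
next
  case (insert a S)
  have "odd (card {T. T \<subseteq> insert a S \<and> u (card T)}) = odd (card {T. T \<subseteq> S \<and> E u (card T)})"
    using step_sets[OF insert(2,1)] parity_xor[OF insert(1)] by simp
  also have "\<dots> = (E ^^ card S) (E u) 0" using insert(3) .
  also have "\<dots> = (E ^^ card (insert a S)) u 0" using insert(1,2) by (simp add: funpow_Suc_right del: funpow.simps)
  finally show ?case .
qed

lemma E_pow2: "(E ^^ (2^s)) u = (\<lambda>j. u j \<noteq> u (j + 2^s))"
proof (induction s arbitrary: u)
  case 0
  show ?case by (simp add: E_def fun_eq_iff)
next
  case (Suc s)
  have p: "(2::nat)^Suc s = 2^s + 2^s" by simp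
  have "(E ^^ (2^Suc s)) u = (E ^^ 2^s) ((E ^^ 2^s) u)"
    unfolding p funpow_add by simp
  also have "\<dots> = (\<lambda>j. u j \<noteq> u (j + 2^Suc s))"
    unfolding p Suc.IH by (auto simp: fun_eq_iff add.assoc)
  finally show ?case .
qed

lemma E_shift: "(E ^^ (m + 2^s)) u k = (E ^^ m) (\<lambda>j. u j \<noteq> u (j + 2^s)) k"
proof -
  have "(E ^^ (m + 2^s)) u = (E ^^ m) ((E ^^ 2^s) u)" by (simp only: funpow_add comp_apply)
  then show ?thesis by (simp only: E_pow2)
qed

lemma E_local: "(\<forall>j\<le>m. u (k+j) = w (k+j)) \<Longrightarrow> (E ^^ m) u k = (E ^^ m) w k"
proof (induction m arbitrary: u w)
  case 0
  then show ?case by simp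
next
  case (Suc m)
  have "\<forall>j\<le>m. E u (k+j) = E w (k+j)"
  proof (intro allI impI)
    fix j assume "j \<le> m"
    then have "j \<le> Suc m" "Suc j \<le> Suc m" by simp_all
    then have "u (k+j) = w (k+j)" "u (k + Suc j) = w (k + Suc j)" using Suc.prems by blast+
    then show "E u (k+j) = E w (k+j)" by (simp add: E_def)
  qed
  then have "(E ^^ m) (E u) k = (E ^^ m) (E w) k" using Suc.IH by blast
  then show ?case by (simp add: funpow_Suc_right del: funpow.simps)
qed

lemma E_false: "(E ^^ m) (\<lambda>_. False) = (\<lambda>_. False)"
proof (induction m)
  case 0
  show ?case by simp
next
  case (Suc m)
  have "E (\<lambda>_. False) = (\<lambda>_. False)" by (simp add: E_def fun_eq_iff)
  then show ?case using Suc.IH by (simp only: funpow.simps comp_apply)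
qed

lemma E_true: "0 < m \<Longrightarrow> (E ^^ m) (\<lambda>_. True) k = False"
proof -
  assume "0 < m"
  then obtain m' where m: "m = Suc m'" by (cases m) auto
  have "E (\<lambda>_. True) = (\<lambda>_. False)" by (simp add: E_def fun_eq_iff)
  then show ?thesis unfolding m by (simp add: funpow_Suc_right E_false del: funpow.simps)
qed

lemma E_first: "(\<forall>j<m. \<not> d (k+j)) \<Longrightarrow> (E ^^ m) d k = d (k+m)"
proof (induction m arbitrary: d)
  case 0
  then show ?case by simp
next
  case (Suc m)
  have "\<forall>j<m. \<not> E d (k+j)"
  proof (intro allI impI)
    fix j assume "j < m"
    then have "j < Suc m" "Suc j < Suc m" by simp_all
    then have "\<not> d (k+j)" "\<not> d (k + Suc j)" using Suc.prems by blast+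
    then show "\<not> E d (k+j)" by (simp add: E_def)
  qed
  then have "(E ^^ m) (E d) k = E d (k+m)" using Suc.IH by blast
  moreover have "\<not> d (k+m)" using Suc.prems by simp
  then have "E d (k+m) = d (k + Suc m)" by (simp add: E_def)
  moreover have "(E ^^ Suc m) d k = (E ^^ m) (E d) k" by (simp add: funpow_Suc_right del: funpow.simps)
  ultimately show ?case by simp
qed

lemma anf_sym:
  assumes "S \<subseteq> {..<n}" "\<forall>T\<subseteq>{..<n}. g T = u (card T)"
  shows "anf_coeff g S = (E ^^ card S) u 0"
proof -
  have "{T. T \<subseteq> S \<and> g T} = {T. T \<subseteq> S \<and> u (card T)}" using assms by blast
  moreover have "finite S" using assms(1) finite_subset by blast
  ultimately show ?thesis unfolding anf_coeff_def using odd_card_E by simp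
qed

lemma deg_less:
  assumes g: "\<forall>T\<subseteq>{..<n}. g T = u (card T)" and m: "0 < m"
    and h: "\<forall>i. m \<le> i \<longrightarrow> i \<le> n \<longrightarrow> \<not> (E ^^ i) u 0"
  shows "alg_deg n g < m"
proof -
  let ?X = "{card S |S. S \<subseteq> {..<n} \<and> anf_coeff g S}"
  have "?X \<subseteq> {..n}"
  proof
    fix x assume "x \<in> ?X"
    then obtain S where "x = card S" "S \<subseteq> {..<n}" by blast
    then have "x \<le> card {..<n}" using card_mono by blast
    then show "x \<in> {..n}" by simp
  qed
  then have fin: "finite (?X \<union> {0})" using finite_subset by blast
  have "\<forall>x\<in>?X \<union> {0}. x < m"
  proof
    fix x assume "x \<in> ?X \<union> {0}"
    then show "x < m"
    proof
      assume "x \<in> ?X"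
      then obtain S where S: "x = card S" "S \<subseteq> {..<n}" "anf_coeff g S" by blast
      have "card S \<le> card {..<n}" using S(2) card_mono by blast
      then have "card S \<le> n" by simp
      moreover have "(E ^^ card S) u 0" using S anf_sym[OF S(2) g] by simp
      ultimately show "x < m" using h S(1) by (meson not_le)
    next
      assume "x \<in> {0}" then show "x < m" using m by simp
    qed
  qed
  then show ?thesis unfolding alg_deg_def using fin by (simp add: Max_less_iff)
qed

lemma deg_ge:
  assumes "alg_deg n g < P" "S \<subseteq> {..<n}" "P \<le> card S"
  shows "\<not> anf_coeff g S"
proof
  assume a: "anf_coeff g S"
  let ?X = "{card S |S. S \<subseteq> {..<n} \<and> anf_coeff g S}"
  have "?X \<subseteq> {..n}"
  proof
    fix x assume "x \<in> ?X"
    then obtain S where "x = card S" "S \<subseteq> {..<n}" by blast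
    then have "x \<le> card {..<n}" using card_mono by blast
    then show "x \<in> {..n}" by simp
  qed
  then have fin: "finite (?X \<union> {0})" using finite_subset by blast
  have "card S \<in> ?X \<union> {0}" using a assms(2) by blast
  then have "card S \<le> alg_deg n g" unfolding alg_deg_def by (rule Max_ge[OF fin])
  then show False using assms by simp
qed

lemma AI_le:
  assumes "nonzero_bf n g" "annihilates n g f \<or> annihilates n g (\<lambda>x. \<not> f x)"
  shows "alg_immunity n f \<le> alg_deg n g"
proof -
  have "\<exists>g'. nonzero_bf n g' \<and> (annihilates n g' f \<or> annihilates n g' (\<lambda>x. \<not> f x)) \<and> alg_deg n g' = alg_deg n g"
    using assms by blast
  then show ?thesis unfolding alg_immunity_def by (rule Least_le)
qed


lemma mod_2H: "w mod (2*H) = w mod H \<or> w mod (2*H) = w mod H + (H::nat)"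
proof -
  have "w mod (H*2) = H * (w div H mod 2) + w mod H" by (rule mod_mult2_eq)
  moreover have "w div H mod 2 = 0 \<or> w div H mod 2 = 1" by auto
  ultimately show ?thesis by (auto simp: mult.commute)
qed

theorem corollary9:
  fixes n :: nat and f :: boolfun
  assumes "n \<ge> 2"
    and "symmetric_bf n f"
    and "alg_immunity n f = nat \<lceil>real n / 2\<rceil>"
  shows "alg_deg n f \<ge> 2 ^ nat \<lfloor>log 2 (real (n - 1))\<rfloor>"
proof -
  define k where "k = floor_log (n - 1)"
  define P where "P = (2::nat) ^ k"
  define D where "D = nat \<lceil>real n / 2\<rceil>"
  define v where "v = (\<lambda>j. f {..<j})"
  have kdef: "nat \<lfloor>log 2 (real (n - 1))\<rfloor> = k"
    unfolding k_def using assms(1) by (simp add: floor_log_altdef)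
  have P1: "P \<le> n - 1" unfolding P_def k_def using assms(1) floor_log_exp2_le[of "n-1"] by simp
  have P2: "n - 1 < 2 * P" unfolding P_def k_def using floor_log_exp2_gt[of "n-1"] by simp
  have Ppos: "0 < P" unfolding P_def by simp
  have sym: "\<forall>T\<subseteq>{..<n}. f T = v (card T)"
  proof (intro allI impI)
    fix T assume T: "T \<subseteq> {..<n}"
    have "card T \<le> card {..<n}" using T card_mono by blast
    then have "{..<card T} \<subseteq> {..<n}" by auto
    moreover have "card {..<card T} = card T" by simp
    ultimately show "f T = v (card T)" using assms(2) T unfolding symmetric_bf_def v_def by metis
  qed
  have AI: "alg_immunity n f = D" using assms(3) unfolding D_def .
  show ?thesis unfolding kdef P_def[symmetric]
  proof (rule ccontr)
    assume "\<not> P \<le> alg_deg n f"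
    then have dlt: "alg_deg n f < P" by simp
    have per0: "\<forall>i. P \<le> i \<longrightarrow> i \<le> n \<longrightarrow> \<not> (E ^^ i) v 0"
    proof (intro allI impI)
      fix i assume i: "P \<le> i" "i \<le> n"
      have S: "{..<i} \<subseteq> {..<n}" using i by auto
      have "\<not> anf_coeff f {..<i}" using deg_ge[OF dlt S] i by simp
      then show "\<not> (E ^^ i) v 0" using anf_sym[OF S sym] by simp
    qed
    define d where "d = (\<lambda>j. v j \<noteq> v (j + P))"
    have dE: "\<forall>m. m + P \<le> n \<longrightarrow> \<not> (E ^^ m) d 0"
    proof (intro allI impI)
      fix m assume "m + P \<le> n"
      then have "\<not> (E ^^ (m + 2^k)) v 0" using per0 unfolding P_def by simp
      then show "\<not> (E ^^ m) d 0" unfolding d_def P_def E_shift .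
    qed
    have dz: "\<And>j. j + P \<le> n \<Longrightarrow> \<not> d j"
    proof -
      fix j show "j + P \<le> n \<Longrightarrow> \<not> d j"
      proof (induction j rule: less_induct)
        case (less j)
        have "\<forall>j'<j. \<not> d (0 + j')" using less by simp
        then have "(E ^^ j) d 0 = d (0 + j)" by (rule E_first)
        then show ?case using dE less.prems by simp
      qed
    qed
    have per: "\<And>j. j + P \<le> n \<Longrightarrow> v (j + P) = v j" using dz unfolding d_def by blast
    have vmod: "\<And>w. w \<le> n \<Longrightarrow> v w = v (w mod P)"
    proof -
      fix w show "w \<le> n \<Longrightarrow> v w = v (w mod P)"
      proof (induction w rule: less_induct)
        case (less w)
        show ?case
        proof (cases "w < P")
          case True then show ?thesis by simp
        next
          case False
          then have w: "w = (w - P) + P" by simp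
          have "v w = v (w - P)" using per[of "w - P"] less.prems w by simp
          also have "\<dots> = v ((w - P) mod P)" using less Ppos False by simp
          also have "(w - P) mod P = w mod P" using False by (simp add: le_mod_geq)
          finally show ?thesis .
        qed
      qed
    qed
    show False
    proof (cases "k = 0")
      case True
      then have P1': "P = 1" unfolding P_def by simp
      then have n2: "n = 2" using P2 assms(1) by simp
      have D1: "D = 1" unfolding D_def n2 by simp
      define g :: boolfun where "g = (\<lambda>_. True)"
      have gdeg: "alg_deg n g < 1"
        apply (rule deg_less[where u = "\<lambda>_. True"])
          apply (simp add: g_def)
         apply simp
        apply (intro allI impI)
        apply (simp add: E_true)
        done
      have vc: "\<And>w. w \<le> n \<Longrightarrow> v w = v 0"
      proof -
        fix w assume "w \<le> n"
        then have "v w = v (w mod P)" by (rule vmod)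
        then show "v w = v 0" using P1' by simp
      qed
      have nz: "nonzero_bf n g" unfolding nonzero_bf_def g_def by blast
      have "annihilates n g f \<or> annihilates n g (\<lambda>x. \<not> f x)"
      proof (cases "v 0")
        case True
        have "annihilates n g (\<lambda>x. \<not> f x)" unfolding annihilates_def
        proof (intro allI impI)
          fix x assume x: "x \<subseteq> {..<n}"
          have "card x \<le> card {..<n}" using x card_mono by blast
          then have "f x = v (card x)" "v (card x) = v 0" using sym x vc[of "card x"] by simp_all
          then have "f x" using True by simp
          then show "\<not> (g x \<and> \<not> f x)" by simp
        qed
        then show ?thesis by blast
      next
        case False
        have "annihilates n g f" unfolding annihilates_def
        proof (intro allI impI)
          fix x assume x: "x \<subseteq> {..<n}"
          have "card x \<le> card {..<n}" using x card_mono by blast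
          then have "f x = v (card x)" "v (card x) = v 0" using sym x vc[of "card x"] by simp_all
          then have "\<not> f x" using False by simp
          then show "\<not> (g x \<and> f x)" by simp
        qed
        then show ?thesis by blast
      qed
      then have "alg_immunity n f \<le> alg_deg n g" using AI_le nz by blast
      then show False using gdeg AI D1 by simp
    next
      case False
      define H where "H = (2::nat) ^ (k - 1)"
      have kk: "k = Suc (k - 1)" using False by simp
      have PH: "P = 2 * H" unfolding P_def H_def by (subst kk) (simp only: power_Suc diff_Suc_1)
      have Hpos: "0 < H" unfolding H_def by simp
      have HD: "H < D"
      proof -
        have "2 * H + 1 \<le> n" using P1 PH assms(1) by simp
        then have "real H < real n / 2" by simp
        also have "real n / 2 \<le> of_int \<lceil>real n / 2\<rceil>" by (rule le_of_int_ceiling)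
        finally have "int H < \<lceil>real n / 2\<rceil>" by linarith
        then show ?thesis unfolding D_def by linarith
      qed
      have HP: "2 ^ (k - 1) = H" unfolding H_def ..
      show False
      proof (cases "\<exists>r<H. v r = v (r + H)")
        case True
        then obtain r where r: "r < H" "v r = v (r + H)" by blast
        define c where "c = v r"
        define u where "u = (\<lambda>j. v (j mod H) = c \<and> v (j mod H + H) = c)"
        define g :: boolfun where "g = (\<lambda>T. u (card T))"
        have uper: "\<And>j. u (j + H) = u j" unfolding u_def by simp
        have gdeg: "alg_deg n g < H"
        proof (rule deg_less[where u = u])
          show "\<forall>T\<subseteq>{..<n}. g T = u (card T)" unfolding g_def by simp
          show "0 < H" by (rule Hpos)
          show "\<forall>i. H \<le> i \<longrightarrow> i \<le> n \<longrightarrow> \<not> (E ^^ i) u 0"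
          proof (intro allI impI)
            fix i assume i: "H \<le> i" "i \<le> n"
            have "(E ^^ i) u 0 = (E ^^ (i - H + 2^(k-1))) u 0" using i HP by simp
            also have "\<dots> = (E ^^ (i - H)) (\<lambda>j. u j \<noteq> u (j + 2^(k-1))) 0" by (rule E_shift)
            also have "(\<lambda>j. u j \<noteq> u (j + 2^(k-1))) = (\<lambda>_. False)" unfolding HP using uper by simp
            finally show "\<not> (E ^^ i) u 0" by (simp add: E_false)
          qed
        qed
        have Hn: "H \<le> n" using PH P1 by simp
        have nz: "nonzero_bf n g" unfolding nonzero_bf_def
        proof (intro exI conjI)
          show "{..<r} \<subseteq> {..<n}" using r Hn by auto
          show "g {..<r}" unfolding g_def u_def c_def using r by simp
        qed
        have fx: "\<And>x. x \<subseteq> {..<n} \<Longrightarrow> g x \<Longrightarrow> f x = c"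
        proof -
          fix x assume x: "x \<subseteq> {..<n}" and gx: "g x"
          have "card x \<le> card {..<n}" using x card_mono by blast
          then have cn: "card x \<le> n" by simp
          have "f x = v (card x)" using sym x by simp
          also have "\<dots> = v (card x mod P)" using vmod[OF cn] .
          finally have "f x = v (card x mod P)" .
          moreover have "card x mod P = card x mod H \<or> card x mod P = card x mod H + H"
            unfolding PH by (rule mod_2H)
          ultimately show "f x = c" using gx unfolding g_def u_def by auto
        qed
        have "annihilates n g f \<or> annihilates n g (\<lambda>x. \<not> f x)"
        proof (cases c)
          case True
          then show ?thesis unfolding annihilates_def using fx by blast
        next
          case False
          then show ?thesis unfolding annihilates_def using fx by blast
        qed
        then have "alg_immunity n f \<le> alg_deg n g" using AI_le nz by blast
        then show False using gdeg AI HD by simp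
      next
        case False
        then have b: "\<And>r. r < H \<Longrightarrow> v r \<noteq> v (r + H)" by blast
        have alt: "\<And>j. j + H \<le> n \<Longrightarrow> v j \<noteq> v (j + H)"
        proof -
          fix j assume j: "j + H \<le> n"
          define r where "r = j mod P"
          have rP: "r < P" unfolding r_def using Ppos by simp
          have v1: "v j = v r" unfolding r_def using vmod[of j] j by simp
          have "v (j + H) = v ((j + H) mod P)" using vmod[of "j + H"] j by simp
          also have "(j + H) mod P = (r + H) mod P" unfolding r_def by (simp add: mod_add_left_eq)
          finally have v2: "v (j + H) = v ((r + H) mod P)" .
          show "v j \<noteq> v (j + H)"
          proof (cases "r < H")
            case True
            then have "(r + H) mod P = r + H" using PH by simp
            then show ?thesis using v1 v2 b True by simp
          next
            case False
            then have "(r + H) mod P = r - H" using PH rP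
              by (simp add: le_mod_geq)
            moreover have "r - H < H" "r - H + H = r" using False rP PH by simp_all
            ultimately show ?thesis using v1 v2 b[of "r - H"] by auto
          qed
        qed
        have fdeg: "alg_deg n f < H + 1"
        proof (rule deg_less[where u = v])
          show "\<forall>T\<subseteq>{..<n}. f T = v (card T)" by (rule sym)
          show "0 < H + 1" by simp
          show "\<forall>i. H + 1 \<le> i \<longrightarrow> i \<le> n \<longrightarrow> \<not> (E ^^ i) v 0"
          proof (intro allI impI)
            fix i assume i: "H + 1 \<le> i" "i \<le> n"
            have "(E ^^ i) v 0 = (E ^^ (i - H + 2^(k-1))) v 0" using i HP by simp
            also have "\<dots> = (E ^^ (i - H)) (\<lambda>j. v j \<noteq> v (j + 2^(k-1))) 0" by (rule E_shift)
            also have "\<dots> = (E ^^ (i - H)) (\<lambda>_. True) 0"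
            proof (rule E_local)
              show "\<forall>j\<le>i - H. (v (0 + j) \<noteq> v (0 + j + 2 ^ (k - 1))) = True"
                using alt i unfolding HP by simp
            qed
            also have "\<dots> = False" using i by (simp add: E_true)
            finally show "\<not> (E ^^ i) v 0" by simp
          qed
        qed
        have "v 0 \<or> v H" using b[of 0] Hpos by auto
        moreover have Hn: "H \<le> n" using PH P1 by simp
        ultimately have nz: "nonzero_bf n f" unfolding nonzero_bf_def v_def
        proof -
          assume h: "f {..<0} \<or> f {..<H}" and Hn: "H \<le> n"
          have "{..<0} \<subseteq> {..<n}" "{..<H} \<subseteq> {..<n}" using Hn by auto
          then show "\<exists>x. x \<subseteq> {..<n} \<and> f x" using h by blast
        qed
        have "annihilates n f (\<lambda>x. \<not> f x)" unfolding annihilates_def by simp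
        then have "alg_immunity n f \<le> alg_deg n f" using AI_le nz by blast
        then show False using fdeg AI HD by simp
      qed
    qed
  qed
qed

end
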